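(* Consider a two-hop amplify-and-forward network with a source, a destination and $K$ energy-harvesting relays $R_1,\dots,R_K$, each with a battery, operating over time slots $t=1,2,\dots$. In slot $t$ the source transmits with power $P$; relay $R_k$ splits its received power $P|h_k(t)|^2$ with ratios $\lambda_{k,I}(t),\lambda_{k,F}(t),\lambda_{k,B}(t)\ge0$, $\lambda_{k,I}(t)+\lambda_{k,F}(t)+\lambda_{k,B}(t)=1$: fraction $\lambda_{k,I}(t)$ is used for information (then corrupted by noise of variance $\sigma_b^2>0$), fraction $\lambda_{k,F}(t)$ is harvested for immediate forwarding, giving power $\eta_1\lambda_{k,F}(t)P|h_k(t)|^2$, and fraction $\lambda_{k,B}(t)$ charges the battery, adding energy $\eta_1\eta_2\lambda_{k,B}(t)P|h_k(t)|^2$, where $\eta_1,\eta_2\in(0,1]$. The relay additionally discharges $b_{k,F}(t)$ with $0\le b_{k,F}(t)\le B_k(t)$ from its battery, where $B_k(t)$ is the battery level at the start of slot $t$, and transmits with power $p_{k,R}(t)=\eta_1\lambda_{k,F}(t)P|h_k(t)|^2+b_{k,F}(t)$; the battery evolves as $B_k(t+1)=B_k(t)+\eta_1\eta_2\lambda_{k,B}(t)P|h_k(t)|^2-b_{k,F}(t)$. With amplification gain $\beta_k(t)=\sqrt{p_{k,R}(t)/(\lambda_{k,I}(t)P|h_k(t)|^2+\sigma_b^2)}$ and phase-aligned distributed beamforming, the SNR at the destination in slot $t$ is $$SNR(t)=\frac{P\Big(\sum_{k=1}^K\beta_k(t)|h_k(t)g_k(t)|\sqrt{\lambda_{k,I}(t)}\Big)^2}{\sum_{k=1}^K\beta_k(t)^2|g_k(t)|^2\sigma_b^2+\sigma_D^2},$$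 with $\sigma_D^2>0$. In the greedy method, at each slot $t$ the decision $(\lambda_{k,I}(t),\lambda_{k,F}(t),\lambda_{k,B}(t),b_{k,F}(t))_{k}$ is chosen to maximize $\tfrac12\log(1+SNR(t))$ given the current battery levels $B_k(t)$, ignoring the effect on later slots. If all batteries are empty initially ($B_k(1)=0$ for all $k$), then the greedy-optimized joint power-splitting and battery operation design uses up the harvested energy at each transmission: $\lambda_{k,B}(t)=0$ and $b_{k,F}(t)=0$ for all $k$ and all $t$, and all batteries remain empty.
   Context: $h_k(t)$ and $g_k(t)$ are the complex source–relay and relay–destination channel gains in slot $t$; $\eta_1$ is the RF-to-DC conversion efficiency and $\eta_2$ the battery storage efficiency. Antenna noise is neglected. Battery energies take values in a discrete set of levels, which does not affect the statement since no charging/discharging occurs. *)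

theory Defs
  imports Complex_Main
begin

text \<open>All per-slot quantities below are functions of the
relay index k (for a fixed slot). Parameters: P source power, sb2 = relay noise variance,
sD2 = destination noise variance, eta1 = RF-to-DC efficiency.\<close>

definition relay_power :: "real \<Rightarrow> real \<Rightarrow> complex \<Rightarrow> real \<Rightarrow> real \<Rightarrow> real" where
  "relay_power eta1 P h lF bF = eta1 * lF * P * (cmod h)^2 + bF"

definition amp_gain :: "real \<Rightarrow> real \<Rightarrow> real \<Rightarrow> complex \<Rightarrow> real \<Rightarrow> real \<Rightarrow> real \<Rightarrow> real" where
  "amp_gain eta1 P sb2 h lI lF bF =
     sqrt (relay_power eta1 P h lF bF / (lI * P * (cmod h)^2 + sb2))"

definition snr :: "nat \<Rightarrow> real \<Rightarrow> real \<Rightarrow> real \<Rightarrow> real \<Rightarrow>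
    (nat \<Rightarrow> complex) \<Rightarrow> (nat \<Rightarrow> complex) \<Rightarrow>
    (nat \<Rightarrow> real) \<Rightarrow> (nat \<Rightarrow> real) \<Rightarrow> (nat \<Rightarrow> real) \<Rightarrow> real" where
  "snr K P sb2 sD2 eta1 h g lI lF bF =
     P * (\<Sum>k<K. amp_gain eta1 P sb2 (h k) (lI k) (lF k) (bF k) * cmod (h k * g k) * sqrt (lI k))^2
     / ((\<Sum>k<K. (amp_gain eta1 P sb2 (h k) (lI k) (lF k) (bF k))^2 * (cmod (g k))^2 * sb2) + sD2)"

definition rate :: "nat \<Rightarrow> real \<Rightarrow> real \<Rightarrow> real \<Rightarrow> real \<Rightarrow>
    (nat \<Rightarrow> complex) \<Rightarrow> (nat \<Rightarrow> complex) \<Rightarrow>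
    (nat \<Rightarrow> real) \<Rightarrow> (nat \<Rightarrow> real) \<Rightarrow> (nat \<Rightarrow> real) \<Rightarrow> real" where
  "rate K P sb2 sD2 eta1 h g lI lF bF = 1/2 * ln (1 + snr K P sb2 sD2 eta1 h g lI lF bF)"

definition feasible :: "nat \<Rightarrow> (nat \<Rightarrow> real) \<Rightarrow>
    (nat \<Rightarrow> real) \<Rightarrow> (nat \<Rightarrow> real) \<Rightarrow> (nat \<Rightarrow> real) \<Rightarrow> (nat \<Rightarrow> real) \<Rightarrow> bool" where
  "feasible K B lI lF lB bF \<longleftrightarrow>
     (\<forall>k<K. 0 \<le> lI k \<and> 0 \<le> lF k \<and> 0 \<le> lB k \<and> lI k + lF k + lB k = 1
            \<and> 0 \<le> bF k \<and> bF k \<le> B k)"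

definition greedy_opt :: "nat \<Rightarrow> real \<Rightarrow> real \<Rightarrow> real \<Rightarrow> real \<Rightarrow>
    (nat \<Rightarrow> complex) \<Rightarrow> (nat \<Rightarrow> complex) \<Rightarrow> (nat \<Rightarrow> real) \<Rightarrow>
    (nat \<Rightarrow> real) \<Rightarrow> (nat \<Rightarrow> real) \<Rightarrow> (nat \<Rightarrow> real) \<Rightarrow> (nat \<Rightarrow> real) \<Rightarrow> bool" where
  "greedy_opt K P sb2 sD2 eta1 h g B lI lF lB bF \<longleftrightarrow>
     feasible K B lI lF lB bF \<and>
     (\<forall>lI' lF' lB' bF'. feasible K B lI' lF' lB' bF' \<longrightarrow>
        rate K P sb2 sD2 eta1 h g lI' lF' bF' \<le> rate K P sb2 sD2 eta1 h g lI lF bF)"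

end

theory Submission
  imports Defs
begin

lemma snr_split:
  fixes lI lF bF :: "nat \<Rightarrow> real"
  assumes "k < K"
  shows "snr K P sb2 sD2 eta1 h g lI lF bF =
    P * ((\<Sum>j\<in>{..<K}-{k}. amp_gain eta1 P sb2 (h j) (lI j) (lF j) (bF j) * cmod (h j * g j) * sqrt (lI j))
         + amp_gain eta1 P sb2 (h k) (lI k) (lF k) (bF k) * cmod (h k * g k) * sqrt (lI k))^2
    / (((\<Sum>j\<in>{..<K}-{k}. (amp_gain eta1 P sb2 (h j) (lI j) (lF j) (bF j))^2 * (cmod (g j))^2 * sb2) + sD2)
       + (amp_gain eta1 P sb2 (h k) (lI k) (lF k) (bF k))^2 * (cmod (g k))^2 * sb2)"
proof -
  have k: "k \<in> {..<K}" using assms by simp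
  show ?thesis unfolding snr_def
    by (simp add: sum.remove[OF finite_lessThan k] algebra_simps)
qed

lemma amp0: "amp_gain eta1 P sb2 h x y 0 = sqrt (eta1 * y * P * (cmod h)^2 / (x * P * (cmod h)^2 + sb2))"
  unfolding amp_gain_def relay_power_def by simp

lemma ratio_mono:
  fixes P S N c b a a' :: real
  assumes "P > 0" "S \<ge> 0" "N + c*b^2 > 0" "b > 0" "0 \<le> a" "a < a'"
  shows "P * (S + b*a)^2 / (N + c*b^2) < P * (S + b*a')^2 / (N + c*b^2)"
proof -
  have "b*a < b*a'" using assms by simp
  have "0 \<le> S + b*a" using assms by simp
  hence "(S + b*a)^2 < (S+b*a')^2"
    using \<open>b*a < b*a'\<close> by (intro power_strict_mono) auto
  hence "P*(S + b*a)^2 < P*(S+b*a')^2" using assms by simp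
  thus ?thesis using assms(3) by (simp add: divide_strict_right_mono)
qed

lemma ratio_zero:
  fixes P S N c b a :: real
  assumes "P > 0" "S \<ge> 0" "N > 0" "c \<ge> 0" "b > 0" "a > 0" "b * S * c \<le> a * N"
  shows "P * S^2 / N < P * (S + b*a)^2 / (N + c*b^2)"
proof -
  have d: "N + c*b^2 > 0" using assms by (simp add: add_pos_nonneg)
  have 1: "S^2 * c * b^2 \<le> S * b * a * N"
  proof -
    have "S * b * (b * S * c) \<le> S * b * (a * N)"
      using assms by (intro mult_left_mono) auto
    thus ?thesis by (simp add: power2_eq_square algebra_simps)
  qed
  have 2: "0 < b^2 * a^2 * N" using assms by simp
  have 3: "0 \<le> S * b * a * N" using assms by simp
  have "S^2 * (N + c*b^2) < (S + b*a)^2 * N"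
    using 1 2 3 by (simp add: power2_eq_square algebra_simps)
  hence "P * (S^2 * (N + c*b^2)) < P * ((S + b*a)^2 * N)" using assms by simp
  thus ?thesis using d assms(3) by (simp add: divide_simps algebra_simps)
qed

lemma improve:
  fixes lI lF lB bF B :: "nat \<Rightarrow> real" and h g :: "nat \<Rightarrow> complex"
  assumes P: "P > 0" and sb: "sb2 > 0" and sD: "sD2 > 0" and e1: "eta1 > 0"
    and hg: "h k \<noteq> 0" "g k \<noteq> 0"
    and feas: "feasible K B lI lF lB bF" and B0: "\<forall>j<K. B j = 0"
    and k: "k < K" and lBk: "lB k > 0"
  shows "\<exists>lI' lF' lB' bF'. feasible K B lI' lF' lB' bF' \<and>
           rate K P sb2 sD2 eta1 h g lI lF bF < rate K P sb2 sD2 eta1 h g lI' lF' bF'"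
proof -
  let ?A = "{..<K}-{k}"
  define S where "S = (\<Sum>j\<in>?A. amp_gain eta1 P sb2 (h j) (lI j) (lF j) (bF j) * cmod (h j * g j) * sqrt (lI j))"
  define N where "N = (\<Sum>j\<in>?A. (amp_gain eta1 P sb2 (h j) (lI j) (lF j) (bF j))^2 * (cmod (g j))^2 * sb2) + sD2"
  define H where "H = (cmod (h k))^2"
  define c where "c = (cmod (g k))^2 * sb2"
  define m where "m = cmod (h k * g k)"
  have Hp: "H > 0" using hg unfolding H_def by simp
  have cp: "c > 0" using hg sb unfolding c_def by simp
  have mp: "m > 0" using hg unfolding m_def by (simp add: norm_mult)
  have Sp: "S \<ge> 0" unfolding S_def amp_gain_def relay_power_def using feas e1 P sb unfolding feasible_def
    by (intro sum_nonneg mult_nonneg_nonneg real_sqrt_ge_zero divide_nonneg_nonneg add_nonneg_nonneg) (auto simp: less_imp_le)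
  have Np: "N > 0" unfolding N_def using sD by (simp add: add_nonneg_pos sum_nonneg sb less_imp_le)
  from feas k have fk: "0 \<le> lI k" "0 \<le> lF k" "0 \<le> lB k" "lI k + lF k + lB k = 1" "bF k = 0"
    using B0 unfolding feasible_def by (auto intro: antisym)
  have sn: "\<And>x y. snr K P sb2 sD2 eta1 h g (lI(k:=x)) (lF(k:=y)) bF =
     P * (S + amp_gain eta1 P sb2 (h k) x y 0 * m * sqrt x)^2 / (N + (amp_gain eta1 P sb2 (h k) x y 0)^2 * c)"
  proof -
    fix x y
    have s1: "(\<Sum>j\<in>?A. amp_gain eta1 P sb2 (h j) ((lI(k:=x)) j) ((lF(k:=y)) j) (bF j) * cmod (h j * g j) * sqrt ((lI(k:=x)) j)) = S"
      unfolding S_def by (intro sum.cong) auto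
    have s2: "(\<Sum>j\<in>?A. (amp_gain eta1 P sb2 (h j) ((lI(k:=x)) j) ((lF(k:=y)) j) (bF j))^2 * (cmod (g j))^2 * sb2) + sD2 = N"
      unfolding N_def by (intro arg_cong2[where f="(+)"] sum.cong) auto
    show "snr K P sb2 sD2 eta1 h g (lI(k:=x)) (lF(k:=y)) bF =
     P * (S + amp_gain eta1 P sb2 (h k) x y 0 * m * sqrt x)^2 / (N + (amp_gain eta1 P sb2 (h k) x y 0)^2 * c)"
      unfolding snr_split[OF k] s1 s2 using fk(5) by (simp add: m_def c_def algebra_simps)
  qed
  have sn0: "snr K P sb2 sD2 eta1 h g lI lF bF = snr K P sb2 sD2 eta1 h g (lI(k:=lI k)) (lF(k:=lF k)) bF"
    by simp
  have snrpos: "\<And>lI lF bF. snr K P sb2 sD2 eta1 h g lI lF bF \<ge> 0"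
    unfolding snr_def using P sD sb
    by (intro divide_nonneg_nonneg add_nonneg_nonneg sum_nonneg) auto
  have rate_mono: "\<And>lI lF bF lI' lF' bF'. snr K P sb2 sD2 eta1 h g lI lF bF < snr K P sb2 sD2 eta1 h g lI' lF' bF'
      \<Longrightarrow> rate K P sb2 sD2 eta1 h g lI lF bF < rate K P sb2 sD2 eta1 h g lI' lF' bF'"
    unfolding rate_def using snrpos by (simp add: add_pos_nonneg)
  have feas': "\<And>x y. 0 \<le> x \<Longrightarrow> 0 \<le> y \<Longrightarrow> x + y \<le> 1 \<Longrightarrow>
      feasible K B (lI(k:=x)) (lF(k:=y)) (lB(k:=1-x-y)) bF"
    using feas unfolding feasible_def by auto
  show ?thesis
  proof (cases "lF k > 0")
    case True
    define d where "d = lI k * P * H + sb2"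
    have dp: "d > 0" unfolding d_def using fk P Hp sb by (simp add: add_nonneg_pos)
    define e where "e = lB k / (1 + lF k * P * H / d)"
    have ep: "e > 0" unfolding e_def using lBk True P Hp dp by (simp add: add_pos_nonneg)
    define x where "x = lI k + e"
    define y where "y = lF k * (x * P * H + sb2) / d"
    have xd: "x * P * H + sb2 = d + e * P * H" unfolding x_def d_def by (simp add: algebra_simps)
    have y2: "y = lF k + e * (lF k * P * H / d)" unfolding y_def xd using dp
      by (simp add: field_simps)
    have "0 < 1 + lF k * P * H / d" using dp P Hp fk by (simp add: add_pos_nonneg)
    hence esum: "e * (1 + lF k * P * H / d) = lB k" unfolding e_def by simp
    have xy: "x + y = 1" using y2 esum fk(4) unfolding x_def by (simp add: algebra_simps)
    have x0: "0 \<le> x" "0 \<le> y" unfolding x_def y_def using fk ep dp P Hp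
      by (auto intro!: divide_nonneg_pos mult_nonneg_nonneg simp: xd[unfolded x_def] add_pos_nonneg)
    have same: "amp_gain eta1 P sb2 (h k) x y 0 = amp_gain eta1 P sb2 (h k) (lI k) (lF k) 0"
    proof -
      have q: "x * P * H + sb2 > 0" using xd dp Hp P ep by (simp add: add_pos_pos)
      have "eta1 * y * P * H / (x * P * H + sb2) = eta1 * lF k * P * H / d"
      proof -
        have r: "y / (x * P * H + sb2) = lF k / d" unfolding y_def using q by simp
        have "eta1 * y * P * H / (x * P * H + sb2) = eta1 * P * H * (y / (x * P * H + sb2))" by simp
        also have "\<dots> = eta1 * lF k * P * H / d" unfolding r by simp
        finally show ?thesis .
      qed
      thus ?thesis unfolding amp0 H_def[symmetric] d_def[symmetric] by simp
    qed
    define b where "b = amp_gain eta1 P sb2 (h k) (lI k) (lF k) 0"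
    have bp: "b > 0" unfolding b_def amp0 H_def[symmetric] d_def[symmetric]
      using e1 True P Hp dp by simp
    have "snr K P sb2 sD2 eta1 h g lI lF bF < snr K P sb2 sD2 eta1 h g (lI(k:=x)) (lF(k:=y)) bF"
      unfolding sn0 sn same b_def[symmetric]
    proof -
      have "P * (S + b * (m * sqrt (lI k)))^2 / (N + c*b^2) < P * (S + b * (m * sqrt x))^2 / (N + c*b^2)"
        using P Sp Np cp bp mp fk ep unfolding x_def
        by (intro ratio_mono) (auto simp: add_pos_nonneg)
      thus "P * (S + b * m * sqrt (lI k))\<^sup>2 / (N + b\<^sup>2 * c) < P * (S + b * m * sqrt x)\<^sup>2 / (N + b\<^sup>2 * c)"
        by (simp add: algebra_simps)
    qed
    hence "rate K P sb2 sD2 eta1 h g lI lF bF < rate K P sb2 sD2 eta1 h g (lI(k:=x)) (lF(k:=y)) bF"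
      by (rule rate_mono)
    thus ?thesis using feas'[OF x0] xy by auto
  next
    case False
    hence lF0: "lF k = 0" using fk by simp
    define x where "x = lI k + lB k / 2"
    define a where "a = m * sqrt x"
    have xp: "x > 0" unfolding x_def using fk lBk by simp
    have ap: "a > 0" unfolding a_def using mp xp by simp
    define M where "M = eta1 * P * H / (x * P * H + sb2)"
    have Mp: "M > 0" unfolding M_def using e1 P Hp xp sb by (simp add: add_pos_pos)
    define \<gamma> where "\<gamma> = a * N / (S * c + 1)"
    have gp: "\<gamma> > 0" unfolding \<gamma>_def using ap Np Sp cp by (simp add: add_nonneg_pos)
    define y where "y = min (lB k / 2) (\<gamma>^2 / M)"
    have yp: "y > 0" unfolding y_def using lBk gp Mp by simp
    have xy: "x + y \<le> 1" unfolding x_def y_def using fk by simp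
    define b where "b = amp_gain eta1 P sb2 (h k) x y 0"
    have bM: "b = sqrt (y * M)" unfolding b_def amp0 H_def[symmetric] M_def by (simp add: algebra_simps)
    have bp: "b > 0" unfolding bM using yp Mp by simp
    have "y * M \<le> \<gamma>^2" unfolding y_def using Mp
      by (simp add: min_def field_simps)
    hence "sqrt (y * M) \<le> sqrt (\<gamma>^2)" by (rule real_sqrt_le_mono)
    hence "b \<le> \<gamma>" unfolding bM using gp by simp
    hence "b * S * c \<le> \<gamma> * S * c" using Sp cp by (simp add: mult_right_mono)
    also have "\<dots> = a * N * (S * c / (S * c + 1))" unfolding \<gamma>_def by simp
    also have "\<dots> \<le> a * N * 1"
    proof (rule mult_left_mono)
      have "0 \<le> S * c" using Sp cp by simp
      thus "S * c / (S * c + 1) \<le> 1" by (simp add: divide_le_eq_1)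
      show "0 \<le> a * N" using ap Np by simp
    qed
    also have "\<dots> = a * N" by simp
    finally have key: "b * S * c \<le> a * N" .
    have old: "snr K P sb2 sD2 eta1 h g lI lF bF = P * S^2 / N"
      unfolding sn0 sn using lF0 by (simp add: amp0)
    have "snr K P sb2 sD2 eta1 h g lI lF bF < snr K P sb2 sD2 eta1 h g (lI(k:=x)) (lF(k:=y)) bF"
      unfolding old sn b_def[symmetric]
    proof -
      have "P * S^2 / N < P * (S + b*a)^2 / (N + c*b^2)"
        using P Sp Np cp bp ap key by (intro ratio_zero) auto
      thus "P * S\<^sup>2 / N < P * (S + b * m * sqrt x)\<^sup>2 / (N + b\<^sup>2 * c)"
        unfolding a_def by (simp add: algebra_simps)
    qed
    hence "rate K P sb2 sD2 eta1 h g lI lF bF < rate K P sb2 sD2 eta1 h g (lI(k:=x)) (lF(k:=y)) bF"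
      by (rule rate_mono)
    thus ?thesis using feas'[of x y] xp yp xy by auto
  qed
qed

theorem theorem1:
  fixes K :: nat and P sb2 sD2 eta1 eta2 :: real
    and h g :: "nat \<Rightarrow> nat \<Rightarrow> complex"
    and lI lF lB bF B :: "nat \<Rightarrow> nat \<Rightarrow> real"
  assumes "P > 0" and "sb2 > 0" and "sD2 > 0"
    and "0 < eta1" and "eta1 \<le> 1" and "0 < eta2" and "eta2 \<le> 1"
    and "\<And>t k. t \<ge> 1 \<Longrightarrow> k < K \<Longrightarrow> h t k \<noteq> 0 \<and> g t k \<noteq> 0"
    and "\<And>k. k < K \<Longrightarrow> B 1 k = 0"
    and "\<And>t k. t \<ge> 1 \<Longrightarrow> k < K \<Longrightarrow>
           B (t + 1) k = B t k + eta1 * eta2 * lB t k * P * (cmod (h t k))^2 - bF t k"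
    and "\<And>t. t \<ge> 1 \<Longrightarrow>
           greedy_opt K P sb2 sD2 eta1 (h t) (g t) (B t) (lI t) (lF t) (lB t) (bF t)"
  shows "\<forall>t\<ge>1. \<forall>k<K. lB t k = 0 \<and> bF t k = 0 \<and> B t k = 0"
proof -
  note A = assms
  have stepL: "\<And>t. t \<ge> 1 \<Longrightarrow> \<forall>k<K. B t k = 0 \<Longrightarrow> \<forall>k<K. lB t k = 0 \<and> bF t k = 0"
  proof -
    fix t :: nat assume t: "t \<ge> 1" and B0: "\<forall>k<K. B t k = 0"
    have go: "greedy_opt K P sb2 sD2 eta1 (h t) (g t) (B t) (lI t) (lF t) (lB t) (bF t)"
      using A(11) t .
    hence feas: "feasible K (B t) (lI t) (lF t) (lB t) (bF t)" unfolding greedy_opt_def by blast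
    show "\<forall>k<K. lB t k = 0 \<and> bF t k = 0"
    proof (intro allI impI)
      fix k assume k: "k < K"
      have "\<not> lB t k > 0"
      proof
        assume pos: "lB t k > 0"
        obtain lI' lF' lB' bF' where f': "feasible K (B t) lI' lF' lB' bF'" and
          lt: "rate K P sb2 sD2 eta1 (h t) (g t) (lI t) (lF t) (bF t) < rate K P sb2 sD2 eta1 (h t) (g t) lI' lF' bF'"
          using improve[OF A(1) A(2) A(3) A(4) _ _ feas B0 k pos] A(8)[OF t k] by blast
        thus False using go f' unfolding greedy_opt_def by (meson not_le)
      qed
      thus "lB t k = 0 \<and> bF t k = 0" using feas B0 k unfolding feasible_def
        by (metis antisym not_less)
    qed
  qed
  have Bz: "\<And>t. t \<ge> 1 \<Longrightarrow> \<forall>k<K. B t k = 0"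
  proof -
    fix t :: nat assume "t \<ge> 1"
    thus "\<forall>k<K. B t k = 0"
    proof (induction t rule: dec_induct)
      case base thus ?case using A(9) by simp
    next
      case (step n)
      have "\<forall>k<K. lB n k = 0 \<and> bF n k = 0" using \<open>1 \<le> n\<close> step.IH by (rule stepL)
      thus ?case using A(10) \<open>1 \<le> n\<close> step.IH by simp
    qed
  qed
  show ?thesis using Bz stepL by blast
qed

end
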